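(* Let $\mathbf r=(M,\Delta)$ be an RSP (realization spectrum problem, as defined in the context) with associated preorder $(\mathscr T,\le_{\mathscr T})$ and model $N=N_{\mathbf r}$. Let $\kappa=\min\{\mathfrak t_{\mathbf r},\mathfrak p_{\mathbf r}\}$. Then $N$ is $(\kappa,1,\Delta)$-saturated, i.e. whenever $p(x)$ is a set of fewer than $\kappa$ formulas of the form $\varphi(x,\bar a)$ with $\varphi(x,\bar y)\in\Delta$ and $\bar a$ a tuple from $N$, and $p$ is finitely satisfiable in $N$, then $p$ is realized in $N$.
   Context: An RSP $\mathbf r=(M,\Delta)$ consists of: (a) a model $M$; (b) predicates $\mathscr T,\le_{\mathscr T}$ and an individual constant $c$ of $\tau_M$ such that $\le_{\mathscr T}^M$ is a preorder on $\mathscr T^M$ (reflexive and transitive; antisymmetry is not required) and $\mathrm{rt}:=c^M\in\mathscr T^M$ satisfies $\mathrm{rt}\le_{\mathscr T} t$ for all $t\in\mathscr T^M$; (c) a unary predicate $P$ and a model $N$ with universe $P^M$ and vocabulary $\tau_N\subseteq\tau_M$, whose relations and functions are those of $M$ (so formulas of $\tau_N$ are interpreted in $M$ with all variables ranging over $P^M$); (d) a set $\Delta$ of first-order formulas $\varphi(x,\bar y)$ of $\tau_N$ closed under conjunctions (if $\varphi_1(x,\bar y_1),\varphi_2(x,\bar y_2)\in\Delta$ then $\varphi_1(x,\bar y_1')\wedge\varphi_2(x,\bar y_2'')\in\Delta$); write $\Delta(N)=\{\varphi(x,\bar a):\varphi(x,\bar y)\in\Delta,\ \bar a$ from $N\}$;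 (e) a binary relation $R^M\subseteq |N|\times\mathscr T^M$, and for $t\in\mathscr T^M$ put $R_t=\{b: bR^Mt\}$; (f) $R_{\mathrm{rt}}=|N|$; (g) if $s\le_{\mathscr T}t$ then $R_s\supseteq R_t$; (h) $R_t\neq\emptyset$ for every $t\in\mathscr T^M$; (i) if $s\in\mathscr T^M$, $\varphi(x,\bar a)\in\Delta(N)$ and some $b\in R_s$ satisfies $N\models\varphi[b,\bar a]$, then there is $t\in\mathscr T^M$ with $s\le_{\mathscr T}t$ and $R_t=\{b\in R_s:N\models\varphi[b,\bar a]\}$; (j) for each $\varphi\in\Delta$ there is a function $F_{\varphi,2}$ of $M$ such that whenever $t\in\mathscr T^M$, $\varphi(x,\bar a)\in\Delta(N)$ and $\varphi(N,\bar a)\ne\emptyset$, the element $s=F_{\varphi,2}(t,\bar a)$ satisfies $s\le_{\mathscr T}t$, $R_s\cap\varphi(N,\bar a)\neq\emptyset$, and every $s_1\le_{\mathscr T}t$ with $R_{s_1}\cap\varphi(N,\bar a)\ne\emptyset$ satisfies $s_1\le_{\mathscr T}s$. For a preorder $(\mathscr T,\le)$: write $s<t$ for $s\le t\wedge s\ne t$. $\mathfrak t_{\mathbf r}$ is the least infinite cardinal $\kappa$ such that there is a $<$-increasing sequence of length $\kappa$ in $\mathscr T^M$ with no upper bound. A $(\kappa_1,\kappa_2)$-pre-cut is a pair $(C_1,C_2)$ of subsets with $C_1\cup C_2$ linearly ordered by $\le$, $a_1\le a_2$ for all $a_1\in C_1,a_2\in C_2$, no $c$ with $a_1\le c\le a_2$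 for all $a_1\in C_1,a_2\in C_2$, $C_1$ of cofinality $\kappa_1$ and $C_2$ with the reversed order of cofinality $\kappa_2$. $\mathfrak p_{\mathbf r}=\min\{\kappa_1+\kappa_2:\kappa_1,\kappa_2\ge\aleph_0$ and $(\mathscr T^M,\le_{\mathscr T})$ has a $(\kappa_1,\kappa_2)$-pre-cut$\}$. *)

theory Defs
  imports Main
begin

text \<open>The universe of M is (a subset of) the type 'a.
  T is the set \<T>^M, le the relation \<le>_\<T>, rt = c^M, N the universe P^M of the model N,
  R the relation R^M. A formula phi(x,y1..yn) of Delta is represented by the pair (n, phi)
  where phi b as means N |= phi[b, as] (as a list of length n).\<close>

type_synonym 'a fml = "nat \<times> ('a \<Rightarrow> 'a list \<Rightarrow> bool)"

definition Rset :: "('a \<Rightarrow> 'a \<Rightarrow> bool) \<Rightarrow> 'a \<Rightarrow> 'a set" where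
  "Rset R t = {b. R b t}"

definition params :: "'a set \<Rightarrow> nat \<Rightarrow> 'a list set" where
  "params N n = {as. length as = n \<and> set as \<subseteq> N}"

definition inst :: "'a fml set \<Rightarrow> 'a set \<Rightarrow> ('a fml \<times> 'a list) set" where
  "inst Delta N = {(f, as). f \<in> Delta \<and> as \<in> params N (fst f)}"

definition RSP ::
  "'a set \<Rightarrow> ('a \<Rightarrow> 'a \<Rightarrow> bool) \<Rightarrow> 'a \<Rightarrow> 'a set \<Rightarrow> ('a \<Rightarrow> 'a \<Rightarrow> bool) \<Rightarrow> 'a fml set \<Rightarrow> bool"
where
  "RSP T le rt N R Delta \<longleftrightarrow>
     \<comment> \<open>(b) preorder with root\<close>
     (\<forall>t\<in>T. le t t) \<and>
     (\<forall>s\<in>T. \<forall>t\<in>T. \<forall>u\<in>T. le s t \<longrightarrow> le t u \<longrightarrow> le s u) \<and>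
     rt \<in> T \<and> (\<forall>t\<in>T. le rt t) \<and>
     \<comment> \<open>(d) closure of Delta under conjunctions (with disjoint parameter tuples)\<close>
     (\<forall>n1 phi1 n2 phi2. (n1, phi1) \<in> Delta \<longrightarrow> (n2, phi2) \<in> Delta \<longrightarrow>
        (n1 + n2, \<lambda>x ys. phi1 x (take n1 ys) \<and> phi2 x (drop n1 ys)) \<in> Delta) \<and>
     \<comment> \<open>(e) R \<subseteq> |N| \<times> T\<close>
     (\<forall>b t. R b t \<longrightarrow> b \<in> N \<and> t \<in> T) \<and>
     \<comment> \<open>(f)\<close>
     Rset R rt = N \<and>
     \<comment> \<open>(g)\<close>
     (\<forall>s\<in>T. \<forall>t\<in>T. le s t \<longrightarrow> Rset R t \<subseteq> Rset R s) \<and>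
     \<comment> \<open>(h)\<close>
     (\<forall>t\<in>T. Rset R t \<noteq> {}) \<and>
     \<comment> \<open>(i)\<close>
     (\<forall>s\<in>T. \<forall>n phi as. (n, phi) \<in> Delta \<longrightarrow> as \<in> params N n \<longrightarrow>
        (\<exists>b\<in>Rset R s. phi b as) \<longrightarrow>
        (\<exists>t\<in>T. le s t \<and> Rset R t = {b\<in>Rset R s. phi b as})) \<and>
     \<comment> \<open>(j)\<close>
     (\<forall>n phi. (n, phi) \<in> Delta \<longrightarrow>
        (\<exists>F. \<forall>t\<in>T. \<forall>as\<in>params N n. (\<exists>b\<in>N. phi b as) \<longrightarrow>
           (F t as \<in> T \<and> le (F t as) t \<and> (\<exists>b\<in>Rset R (F t as). phi b as) \<and>
            (\<forall>s1\<in>T. le s1 t \<longrightarrow> (\<exists>b\<in>Rset R s1. phi b as) \<longrightarrow> le s1 (F t as)))))"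

definition strict :: "('a \<Rightarrow> 'a \<Rightarrow> bool) \<Rightarrow> 'a \<Rightarrow> 'a \<Rightarrow> bool" where
  "strict le s t \<longleftrightarrow> le s t \<and> s \<noteq> t"

text \<open>There is a strictly increasing sequence in T of length |I| (indexed by the initial
  ordinal, i.e. a cardinal well-order r on I) with no upper bound in T.\<close>
definition unbounded_seq ::
  "'a set \<Rightarrow> ('a \<Rightarrow> 'a \<Rightarrow> bool) \<Rightarrow> 'b set \<Rightarrow> 'b rel \<Rightarrow> bool" where
  "unbounded_seq T le I r \<longleftrightarrow>
     (\<exists>f. f ` I \<subseteq> T \<and>
          (\<forall>i\<in>I. \<forall>j\<in>I. (i, j) \<in> r \<and> i \<noteq> j \<longrightarrow> strict le (f i) (f j)) \<and>
          \<not> (\<exists>u\<in>T. \<forall>i\<in>I. le (f i) u))"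

text \<open>|A| < t_r: no infinite cardinal kappa \<le> |A| (represented by a subset I of A with a
  cardinal well-order) carries an unbounded strictly increasing sequence.\<close>
definition card_below_t :: "'a set \<Rightarrow> ('a \<Rightarrow> 'a \<Rightarrow> bool) \<Rightarrow> 'b set \<Rightarrow> bool" where
  "card_below_t T le A \<longleftrightarrow>
     (\<forall>I r. I \<subseteq> A \<longrightarrow> infinite I \<longrightarrow> card_order_on I r \<longrightarrow> \<not> unbounded_seq T le I r)"

definition precut :: "'a set \<Rightarrow> ('a \<Rightarrow> 'a \<Rightarrow> bool) \<Rightarrow> 'a set \<Rightarrow> 'a set \<Rightarrow> bool" where
  "precut T le C1 C2 \<longleftrightarrow>
     C1 \<subseteq> T \<and> C2 \<subseteq> T \<and>
     \<comment> \<open>C1 \<union> C2 linearly ordered by le\<close>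
     (\<forall>a\<in>C1 \<union> C2. \<forall>b\<in>C1 \<union> C2. le a b \<or> le b a) \<and>
     (\<forall>a\<in>C1 \<union> C2. \<forall>b\<in>C1 \<union> C2. le a b \<longrightarrow> le b a \<longrightarrow> a = b) \<and>
     (\<forall>a1\<in>C1. \<forall>a2\<in>C2. le a1 a2) \<and>
     \<not> (\<exists>c\<in>T. \<forall>a1\<in>C1. \<forall>a2\<in>C2. le a1 c \<and> le c a2)"

definition cofinal :: "('a \<Rightarrow> 'a \<Rightarrow> bool) \<Rightarrow> 'a set \<Rightarrow> 'a set \<Rightarrow> bool" where
  "cofinal le C D \<longleftrightarrow> D \<subseteq> C \<and> (\<forall>c\<in>C. \<exists>d\<in>D. le c d)"

text \<open>cf(C, le) is infinite and \<le> |A|.\<close>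
definition cf_inf_le :: "('a \<Rightarrow> 'a \<Rightarrow> bool) \<Rightarrow> 'a set \<Rightarrow> 'b set \<Rightarrow> bool" where
  "cf_inf_le le C A \<longleftrightarrow>
     \<not> (\<exists>D. finite D \<and> cofinal le C D) \<and>
     (\<exists>D. cofinal le C D \<and> (\<exists>g. inj_on g D \<and> g ` D \<subseteq> A))"

text \<open>|A| < p_r: there is no (kappa1,kappa2)-pre-cut with kappa1, kappa2 infinite and
  kappa1 + kappa2 \<le> |A| (i.e. both \<le> |A|).\<close>
definition card_below_p :: "'a set \<Rightarrow> ('a \<Rightarrow> 'a \<Rightarrow> bool) \<Rightarrow> 'b set \<Rightarrow> bool" where
  "card_below_p T le A \<longleftrightarrow>
     \<not> (\<exists>C1 C2. precut T le C1 C2 \<and> cf_inf_le le C1 A \<and> cf_inf_le (\<lambda>x y. le y x) C2 A)"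

definition realized :: "'a set \<Rightarrow> ('a fml \<times> 'a list) set \<Rightarrow> bool" where
  "realized N p \<longleftrightarrow> (\<exists>b\<in>N. \<forall>(f, as)\<in>p. snd f b as)"

definition fin_sat :: "'a set \<Rightarrow> ('a fml \<times> 'a list) set \<Rightarrow> bool" where
  "fin_sat N p \<longleftrightarrow> (\<forall>q\<subseteq>p. finite q \<longrightarrow> realized N q)"

end

theory Submission
  imports Defs "HOL-Algebra.Free_Abelian_Groups"
begin
unbundle cardinal_syntax


definition lin :: "('a \<Rightarrow> 'a \<Rightarrow> bool) \<Rightarrow> 'a set \<Rightarrow> bool" where
  "lin leq C \<longleftrightarrow> (\<forall>x\<in>C. \<forall>y\<in>C. leq x y \<or> leq y x)"

lemma finite_max:
  assumes trans: "\<forall>s\<in>T. \<forall>t\<in>T. \<forall>u\<in>T. leq s t \<longrightarrow> leq t u \<longrightarrow> leq s u"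
  shows "finite J \<Longrightarrow> J \<noteq> {} \<Longrightarrow> h ` J \<subseteq> T \<Longrightarrow> lin leq (h ` J) \<Longrightarrow> \<exists>m\<in>J. \<forall>j\<in>J. leq (h j) (h m)"
proof (induction J rule: finite_ne_induct)
  case (singleton x)
  then show ?case by (auto simp: lin_def)
next
  case (insert x F)
  then obtain m where m: "m \<in> F" "\<forall>j\<in>F. leq (h j) (h m)" by (auto simp: lin_def)
  show ?case
  proof (cases "leq (h m) (h x)")
    case True
    have hx: "h x \<in> T" "h m \<in> T" using insert.prems m by auto
    have xx: "leq (h x) (h x)" using insert.prems unfolding lin_def by blast
    have "\<forall>j\<in>insert x F. leq (h j) (h x)"
    proof
      fix j assume j: "j \<in> insert x F"
      show "leq (h j) (h x)"
      proof (cases "j = x")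
        case True then show ?thesis using xx by simp
      next
        case False
        then have "j \<in> F" using j by auto
        moreover then have "h j \<in> T" using insert.prems by auto
        ultimately show ?thesis using m True trans hx by blast
      qed
    qed
    then show ?thesis by blast
  next
    case False
    then have "leq (h x) (h m)" using insert.prems m by (auto simp: lin_def)
    then show ?thesis using m by auto
  qed
qed

lemma chain_bound:
  fixes leq :: "'a \<Rightarrow> 'a \<Rightarrow> bool" and p :: "'b set"
  assumes refl: "\<forall>t\<in>T. leq t t"
    and trans: "\<forall>s\<in>T. \<forall>t\<in>T. \<forall>u\<in>T. leq s t \<longrightarrow> leq t u \<longrightarrow> leq s u"
    and rt: "rt \<in> T" "\<forall>t\<in>T. leq rt t"
    and ct: "card_below_t T leq p"
  shows "\<forall>h. J \<subseteq> p \<longrightarrow> h ` J \<subseteq> T \<longrightarrow> lin leq (h ` J) \<longrightarrow> (\<exists>u\<in>T. \<forall>j\<in>J. leq (h j) u)"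
proof (induction J rule: wf_induct[OF wf_inv_image[OF wf_ordLess, of card_of]])
  case (1 J)
  show ?case
  proof (intro allI impI)
    fix h assume J: "J \<subseteq> p" "h ` J \<subseteq> T" "lin leq (h ` J)"
    have IH: "\<exists>u\<in>T. \<forall>j\<in>X. leq (h j) u" if "X \<subseteq> J" "|X| <o |J|" for X
    proof -
      have "X \<subseteq> p" "h ` X \<subseteq> T" "lin leq (h ` X)" using that J by (auto simp: lin_def) blast
      moreover have "(X, J) \<in> inv_image ordLess card_of" using that(2) by simp
      ultimately show ?thesis using 1 by blast
    qed
    show "\<exists>u\<in>T. \<forall>j\<in>J. leq (h j) u"
    proof (cases "finite J")
      case True
      show ?thesis
      proof (cases "J = {}")
        case True then show ?thesis using rt by auto
      next
        case False
        then obtain m where "m \<in> J" "\<forall>j\<in>J. leq (h j) (h m)"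
          using finite_max[OF trans \<open>finite J\<close> False J(2,3)] by blast
        then show ?thesis using J(2) by auto
      qed
    next
      case False
      show ?thesis
      proof (rule ccontr)
        assume nb: "\<not> (\<exists>u\<in>T. \<forall>j\<in>J. leq (h j) u)"
        have hT: "\<And>j. j \<in> J \<Longrightarrow> h j \<in> T" using J(2) by auto
        have lin': "\<And>i j. i \<in> J \<Longrightarrow> j \<in> J \<Longrightarrow> leq (h i) (h j) \<or> leq (h j) (h i)"
          using J(3) by (auto simp: lin_def)
        have above: "\<exists>c\<in>J. leq (h k) (h c) \<and> (\<forall>x\<in>X. leq (h x) (h c) \<and> \<not> leq (h c) (h x))"
          if X: "X \<subseteq> J" "|X| <o |J|" and k: "k \<in> J" for X k
        proof -
          obtain u where u: "u \<in> T" "\<forall>j\<in>X. leq (h j) u" using IH[OF X] by blast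
          have "\<exists>c0\<in>J. \<forall>x\<in>X. leq (h x) (h c0)"
          proof (rule ccontr)
            assume "\<not> ?thesis"
            then have "\<forall>c\<in>J. leq (h c) u"
              using u X lin' hT trans by (metis subsetD)
            then show False using nb u by blast
          qed
          then obtain c0 where c0: "c0 \<in> J" "\<forall>x\<in>X. leq (h x) (h c0)" by blast
          obtain c1 where c1: "c1 \<in> J" "\<forall>x\<in>X. leq (h x) (h c1)" "leq (h k) (h c1)"
          proof (cases "leq (h k) (h c0)")
            case True then show ?thesis using that c0 by blast
          next
            case False
            then have "leq (h c0) (h k)" using lin' c0 k by blast
            then show ?thesis using that[of k] c0 k X hT trans by (meson subsetD refl)
          qed
          have "\<exists>c\<in>J. \<not> leq (h c) (h c1)"
            using nb c1 hT by blast
          then obtain c where c: "c \<in> J" "\<not> leq (h c) (h c1)" by blast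
          then have "leq (h c1) (h c)" using lin' c1 by blast
          then show ?thesis using c c1 hT trans X k by (meson subsetD)
        qed
        obtain r where r: "card_order_on J r" using card_order_on by blast
        have Fr: "Field r = J" and Cr: "Card_order r" using card_order_on_Card_order[OF r] by auto
        have wo: "Well_order r" using Cr card_order_on_def by blast
        have wf: "wf (r - Id)" using wo wo_rel.WF wo_rel_def by blast
        have rJ: "r =o |J|" using card_of_unique[OF r] .
        define X where "X = (\<lambda>g k. g ` underS r k \<inter> J)"
        have Xsmall: "|X g k| <o |J|" if "k \<in> J" for g k
        proof -
          have "|X g k| \<le>o |g ` underS r k|" unfolding X_def by (rule card_of_mono1) auto
          also have "|g ` underS r k| \<le>o |underS r k|" by (rule card_of_image)
          also have "|underS r k| <o r" using card_of_underS[OF Cr] that Fr by simp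
          also have "r =o |J|" by (rule rJ)
          finally show ?thesis .
        qed
        define H where "H = (\<lambda>g k. SOME c. c \<in> J \<and> leq (h k) (h c) \<and> (\<forall>x\<in>X g k. leq (h x) (h c) \<and> \<not> leq (h c) (h x)))"
        have Hspec: "H g k \<in> J \<and> leq (h k) (h (H g k)) \<and> (\<forall>x\<in>X g k. leq (h x) (h (H g k)) \<and> \<not> leq (h (H g k)) (h x))"
          if "k \<in> J" for g k
          unfolding H_def by (rule someI_ex) (use above[of "X g k" k] Xsmall[OF that] that X_def in auto)
        define f where "f = wfrec (r - Id) H"
        have feq: "f k = H (cut f (r - Id) k) k" for k
          unfolding f_def by (rule wfrec[OF wf])
        have fJ: "f k \<in> J" if "k \<in> J" for k using Hspec[OF that] feq by metis
        have fk: "leq (h k) (h (f k))" if "k \<in> J" for k using Hspec[OF that] feq by metis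
        have finc: "leq (h (f i)) (h (f j)) \<and> \<not> leq (h (f j)) (h (f i))"
          if "i \<in> J" "j \<in> J" "(i, j) \<in> r" "i \<noteq> j" for i j
        proof -
          have "f i \<in> X (cut f (r - Id) j) j"
          proof -
            have "cut f (r - Id) j i = f i" using that by (simp add: cut_apply)
            moreover have "i \<in> underS r j" using that unfolding underS_def by auto
            ultimately show ?thesis unfolding X_def using fJ[OF that(1)] by (metis IntI image_eqI)
          qed
          then show ?thesis using Hspec[OF that(2), of "cut f (r - Id) j"] feq[of j] by metis
        qed
        have "\<not> unbounded_seq T leq J r"
          using ct J(1) False r unfolding card_below_t_def by blast
        moreover have "unbounded_seq T leq J r"
          unfolding unbounded_seq_def
        proof (intro exI[of _ "h \<circ> f"] conjI)
          show "(h \<circ> f) ` J \<subseteq> T" using fJ hT by auto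
          show "\<forall>i\<in>J. \<forall>j\<in>J. (i, j) \<in> r \<and> i \<noteq> j \<longrightarrow> strict leq ((h \<circ> f) i) ((h \<circ> f) j)"
            using finc refl hT fJ unfolding strict_def by (metis comp_apply)
          show "\<not> (\<exists>u\<in>T. \<forall>i\<in>J. leq ((h \<circ> f) i) u)"
            using nb fk trans hT fJ by (metis comp_apply)
        qed
        ultimately show False by blast
      qed
    qed
  qed
qed



lemma inj_image:
  assumes "inj_on g K" "g ` K \<subseteq> p"
  shows "\<exists>g'. inj_on g' (f ` K) \<and> g' ` (f ` K) \<subseteq> p"
proof (intro exI conjI)
  show "inj_on (g \<circ> inv_into K f) (f ` K)"
    by (rule comp_inj_on) (auto intro: inj_on_inv_into assms(1)[THEN inj_on_subset] simp: inv_into_into image_subset_iff)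
  show "(g \<circ> inv_into K f) ` (f ` K) \<subseteq> p" using assms(2) by (auto simp: inv_into_into image_subset_iff)
qed

lemma lower_bound:
  fixes leq :: "'a \<Rightarrow> 'a \<Rightarrow> bool" and p :: "'b set"
  assumes refl: "\<forall>t\<in>T. leq t t"
    and trans: "\<forall>s\<in>T. \<forall>t\<in>T. \<forall>u\<in>T. leq s t \<longrightarrow> leq t u \<longrightarrow> leq s u"
    and rt: "rt \<in> T" "\<forall>t\<in>T. leq rt t"
    and cp: "card_below_p T leq p"
    and K: "K \<subseteq> T" "lin leq K" "inj_on gK K" "gK ` K \<subseteq> p"
    and D: "D \<subseteq> T" "lin leq D" "inj_on gD D" "gD ` D \<subseteq> p"
    and KD: "\<forall>k\<in>K. \<forall>d\<in>D. leq k d"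
    and U0: "\<exists>u\<in>T. \<forall>k\<in>K. leq k u"
  shows "\<exists>c\<in>T. (\<forall>k\<in>K. leq k c) \<and> (\<forall>d\<in>D. leq c d)"
proof -
  consider "D = {}" | "\<exists>d0\<in>D. \<forall>d\<in>D. leq d0 d" | "K = {}" | "\<exists>k0\<in>K. \<forall>k\<in>K. leq k k0"
    | "D \<noteq> {}" "\<not> (\<exists>d0\<in>D. \<forall>d\<in>D. leq d0 d)" "K \<noteq> {}" "\<not> (\<exists>k0\<in>K. \<forall>k\<in>K. leq k k0)"
    by blast
  then show ?thesis
  proof cases
    case 1 then show ?thesis using U0 by auto
  next
    case 2 then show ?thesis using KD D by blast
  next
    case 3 then show ?thesis using rt D by blast
  next
    case 4 then show ?thesis using KD K by blast
  next
    case 5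
    show ?thesis
    proof (rule ccontr)
      assume noc: "\<not> ?thesis"
      define S where "S = K \<union> D"
      have ST: "S \<subseteq> T" using K D S_def by auto
      have linS: "\<And>x y. x \<in> S \<Longrightarrow> y \<in> S \<Longrightarrow> leq x y \<or> leq y x"
        using K(2) D(2) KD unfolding S_def lin_def by blast
      define rep where "rep x = (SOME y. y \<in> S \<and> leq x y \<and> leq y x)" for x
      have rep1: "rep x \<in> S \<and> leq x (rep x) \<and> leq (rep x) x" if "x \<in> S" for x
        unfolding rep_def by (rule someI[of _ x]) (use that refl ST in auto)
      have repT: "rep x \<in> T" if "x \<in> S" for x using rep1[OF that] ST by auto
      have rep_eq: "rep x = rep y" if "x \<in> S" "y \<in> S" "leq x y" "leq y x" for x y
      proof -
        have "(\<lambda>z. z \<in> S \<and> leq x z \<and> leq z x) = (\<lambda>z. z \<in> S \<and> leq y z \<and> leq z y)"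
        proof (rule ext)
          fix z
          show "(z \<in> S \<and> leq x z \<and> leq z x) = (z \<in> S \<and> leq y z \<and> leq z y)"
            using that trans ST by (meson subsetD)
        qed
        then show ?thesis unfolding rep_def by simp
      qed
      have lerep: "leq (rep x) (rep y) \<longleftrightarrow> leq x y" if "x \<in> S" "y \<in> S" for x y
        using rep1[OF that(1)] rep1[OF that(2)] trans ST that repT by (meson subsetD)
      define C1 where "C1 = rep ` K"
      define C2 where "C2 = rep ` D"
      have KS: "K \<subseteq> S" and DS: "D \<subseteq> S" unfolding S_def by auto
      have pc: "precut T leq C1 C2"
        unfolding precut_def
      proof (intro conjI)
        show "C1 \<subseteq> T" "C2 \<subseteq> T" unfolding C1_def C2_def using repT KS DS by auto
        show "\<forall>a\<in>C1 \<union> C2. \<forall>b\<in>C1 \<union> C2. leq a b \<or> leq b a"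
        proof (intro ballI)
          fix a b assume "a \<in> C1 \<union> C2" "b \<in> C1 \<union> C2"
          then obtain x y where "x \<in> S" "y \<in> S" "a = rep x" "b = rep y"
            unfolding C1_def C2_def using KS DS by blast
          then show "leq a b \<or> leq b a" using lerep linS by metis
        qed
        show "\<forall>a\<in>C1 \<union> C2. \<forall>b\<in>C1 \<union> C2. leq a b \<longrightarrow> leq b a \<longrightarrow> a = b"
        proof (intro ballI impI)
          fix a b assume "a \<in> C1 \<union> C2" "b \<in> C1 \<union> C2" "leq a b" "leq b a"
          moreover obtain x y where "x \<in> S" "y \<in> S" "a = rep x" "b = rep y"
            using calculation unfolding C1_def C2_def using KS DS by blast
          ultimately show "a = b" using lerep rep_eq by metis
        qed
        show "\<forall>a1\<in>C1. \<forall>a2\<in>C2. leq a1 a2"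
          unfolding C1_def C2_def using lerep KD KS DS by (metis (no_types, lifting) imageE subsetD)
        show "\<not> (\<exists>c\<in>T. \<forall>a1\<in>C1. \<forall>a2\<in>C2. leq a1 c \<and> leq c a2)"
        proof
          assume "\<exists>c\<in>T. \<forall>a1\<in>C1. \<forall>a2\<in>C2. leq a1 c \<and> leq c a2"
          then obtain c where c: "c \<in> T" "\<forall>a1\<in>C1. \<forall>a2\<in>C2. leq a1 c \<and> leq c a2" by blast
          have "\<forall>k\<in>K. leq k c"
          proof
            fix k assume k: "k \<in> K"
            obtain d where "d \<in> D" using 5 by blast
            then have "leq (rep k) c" using c k unfolding C1_def C2_def by auto
            moreover have "k \<in> T" "rep k \<in> T" using k KS ST repT by auto
            ultimately show "leq k c" using rep1[of k] k KS trans c by blast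
          qed
          moreover have "\<forall>d\<in>D. leq c d"
          proof
            fix d assume d: "d \<in> D"
            obtain k where "k \<in> K" using 5 by blast
            then have "leq c (rep d)" using c d unfolding C1_def C2_def by auto
            moreover have "d \<in> T" "rep d \<in> T" using d DS ST repT by auto
            ultimately show "leq c d" using rep1[of d] d DS trans c by blast
          qed
          ultimately show False using noc c by blast
        qed
      qed
      have C1T: "C1 \<subseteq> T" and C2T: "C2 \<subseteq> T" using pc unfolding precut_def by blast+
      have cf1: "cf_inf_le leq C1 p"
        unfolding cf_inf_le_def
      proof (intro conjI)
        show "\<not> (\<exists>D'. finite D' \<and> cofinal leq C1 D')"
        proof
          assume "\<exists>D'. finite D' \<and> cofinal leq C1 D'"
          then obtain D' where D': "finite D'" "D' \<subseteq> C1" "\<forall>c\<in>C1. \<exists>d\<in>D'. leq c d"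
            unfolding cofinal_def by blast
          have "C1 \<noteq> {}" using 5 C1_def by auto
          then have "D' \<noteq> {}" using D' by auto
          moreover have "id ` D' \<subseteq> T" "lin leq (id ` D')"
          proof -
            have "\<forall>a\<in>C1 \<union> C2. \<forall>b\<in>C1 \<union> C2. leq a b \<or> leq b a" "C1 \<subseteq> T" "C2 \<subseteq> T"
              using pc unfolding precut_def by blast+
            then show "id ` D' \<subseteq> T" "lin leq (id ` D')" unfolding lin_def using D'(2) by (simp; blast)+
          qed
          ultimately obtain m where m: "m \<in> D'" "\<forall>j\<in>D'. leq j m"
            using finite_max[OF trans D'(1), of id] by auto
          obtain k0 where k0: "k0 \<in> K" "m = rep k0" using m D' C1_def by auto
          have "\<forall>k\<in>K. leq k k0"
          proof
            fix k assume k: "k \<in> K"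
            obtain d where d: "d \<in> D'" "leq (rep k) d" using D'(3) k C1_def by auto
            have dT: "d \<in> T" using d D'(2) C1T by blast
            have mT: "m \<in> T" using \<open>m \<in> D'\<close> D'(2) C1T by blast
            have rT: "rep k \<in> T" using repT k KS by blast
            have "leq d m" using m(2) d(1) by blast
            then have "leq (rep k) m" using d(2) trans dT mT rT by blast
            then show "leq k k0" using lerep k k0 KS by auto
          qed
          then show False using 5 k0 by blast
        qed
        show "\<exists>D'. cofinal leq C1 D' \<and> (\<exists>g. inj_on g D' \<and> g ` D' \<subseteq> p)"
          using inj_image[OF K(3,4), of rep] refl pc unfolding cofinal_def C1_def precut_def
          by (metis order_refl subsetD)
      qed
      have cf2: "cf_inf_le (\<lambda>x y. leq y x) C2 p"
        unfolding cf_inf_le_def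
      proof (intro conjI)
        show "\<not> (\<exists>D'. finite D' \<and> cofinal (\<lambda>x y. leq y x) C2 D')"
        proof
          assume "\<exists>D'. finite D' \<and> cofinal (\<lambda>x y. leq y x) C2 D'"
          then obtain D' where D': "finite D'" "D' \<subseteq> C2" "\<forall>c\<in>C2. \<exists>d\<in>D'. leq d c"
            unfolding cofinal_def by blast
          have "C2 \<noteq> {}" using 5 C2_def by auto
          then have "D' \<noteq> {}" using D' by auto
          moreover have "id ` D' \<subseteq> T" "lin (\<lambda>x y. leq y x) (id ` D')"
          proof -
            have "\<forall>a\<in>C1 \<union> C2. \<forall>b\<in>C1 \<union> C2. leq a b \<or> leq b a" "C1 \<subseteq> T" "C2 \<subseteq> T"
              using pc unfolding precut_def by blast+
            then show "id ` D' \<subseteq> T" "lin (\<lambda>x y. leq y x) (id ` D')" unfolding lin_def using D'(2) by (simp; blast)+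
          qed
          moreover have trans': "\<forall>s\<in>T. \<forall>t\<in>T. \<forall>u\<in>T. leq t s \<longrightarrow> leq u t \<longrightarrow> leq u s"
            using trans by blast
          ultimately obtain m where m: "m \<in> D'" "\<forall>j\<in>D'. leq m j"
            using finite_max[OF trans' D'(1), of id] by auto
          obtain d0 where d0: "d0 \<in> D" "m = rep d0" using m D' C2_def by auto
          have "\<forall>d\<in>D. leq d0 d"
          proof
            fix d assume d: "d \<in> D"
            obtain e where e: "e \<in> D'" "leq e (rep d)" using D'(3) d C2_def by auto
            have eT: "e \<in> T" using e D'(2) C2T by blast
            have mT: "m \<in> T" using \<open>m \<in> D'\<close> D'(2) C2T by blast
            have rT: "rep d \<in> T" using repT d DS by blast
            have "leq m e" using m(2) e(1) by blast
            then have "leq m (rep d)" using e(2) trans eT mT rT by blast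
            then show "leq d0 d" using lerep d d0 DS by auto
          qed
          then show False using 5 d0 by blast
        qed
        show "\<exists>D'. cofinal (\<lambda>x y. leq y x) C2 D' \<and> (\<exists>g. inj_on g D' \<and> g ` D' \<subseteq> p)"
          using inj_image[OF D(3,4), of rep] refl pc unfolding cofinal_def C2_def precut_def
          by (metis order_refl subsetD)
      qed
      show False using cp pc cf1 cf2 unfolding card_below_p_def by blast
    qed
  qed
qed



lemma conj_inst:
  assumes Dc: "\<forall>n1 phi1 n2 phi2. (n1, phi1) \<in> Delta \<longrightarrow> (n2, phi2) \<in> Delta \<longrightarrow>
        (n1 + n2, \<lambda>x ys. phi1 x (take n1 ys) \<and> phi2 x (drop n1 ys)) \<in> Delta"
  shows "finite q \<Longrightarrow> q \<noteq> {} \<Longrightarrow> q \<subseteq> inst Delta N \<Longrightarrow>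
    \<exists>n phi as. (n, phi) \<in> Delta \<and> as \<in> params N n \<and> (\<forall>b. phi b as \<longleftrightarrow> (\<forall>(f, a)\<in>q. snd f b a))"
proof (induction q rule: finite_ne_induct)
  case (singleton x)
  obtain n phi a where x: "x = ((n, phi), a)" by (metis prod.collapse)
  show ?case using singleton x by (intro exI[of _ n] exI[of _ phi] exI[of _ a]) (auto simp: inst_def)
next
  case (insert x F)
  obtain n2 phi2 a2 where x: "x = ((n2, phi2), a2)" by (metis prod.collapse)
  obtain n1 phi1 as1 where IH: "(n1, phi1) \<in> Delta" "as1 \<in> params N n1"
    "\<forall>b. phi1 b as1 \<longleftrightarrow> (\<forall>(f, a)\<in>F. snd f b a)" using insert by auto
  have x2: "(n2, phi2) \<in> Delta" "a2 \<in> params N n2" using insert.prems x by (auto simp: inst_def)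
  have len: "length as1 = n1" using IH(2) by (simp add: params_def)
  show ?case
    apply (intro exI[of _ "n1 + n2"] exI[of _ "\<lambda>x ys. phi1 x (take n1 ys) \<and> phi2 x (drop n1 ys)"]
        exI[of _ "as1 @ a2"] conjI)
    using Dc IH(1) x2(1) apply blast
    using IH(2) x2(2) apply (simp add: params_def)
    using IH(3) len x by auto
qed

lemma fun_inj:
  assumes fn: "\<forall>x s s'. (x, s) \<in> W \<longrightarrow> (x, s') \<in> W \<longrightarrow> s = s'"
    and P: "fst ` W \<subseteq> P" and g: "inj_on g P" "g ` P \<subseteq> p"
  shows "inj_on (\<lambda>s. g (SOME x. (x, s) \<in> W)) (snd ` W) \<and> (\<lambda>s. g (SOME x. (x, s) \<in> W)) ` (snd ` W) \<subseteq> p"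
proof -
  have sm: "(SOME x. (x, s) \<in> W, s) \<in> W" if "s \<in> snd ` W" for s
    using that by (auto intro: someI)
  have smP: "(SOME x. (x, s) \<in> W) \<in> P" if "s \<in> snd ` W" for s
    using sm[OF that] P by force
  show ?thesis
  proof
    show "inj_on (\<lambda>s. g (SOME x. (x, s) \<in> W)) (snd ` W)"
    proof (rule inj_onI)
      fix s1 s2 assume s: "s1 \<in> snd ` W" "s2 \<in> snd ` W"
        "g (SOME x. (x, s1) \<in> W) = g (SOME x. (x, s2) \<in> W)"
      then have "(SOME x. (x, s1) \<in> W) = (SOME x. (x, s2) \<in> W)"
        using g(1) smP by (meson inj_onD)
      then show "s1 = s2" using sm[OF s(1)] sm[OF s(2)] fn by metis
    qed
    show "(\<lambda>s. g (SOME x. (x, s) \<in> W)) ` (snd ` W) \<subseteq> p" using smP g(2) by blast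
  qed
qed

theorem claim1p8:
  fixes T N :: "'a set" and le R :: "'a \<Rightarrow> 'a \<Rightarrow> bool" and rt :: 'a
    and Delta :: "'a fml set" and p :: "('a fml \<times> 'a list) set"
  assumes "RSP T le rt N R Delta"
    and "p \<subseteq> inst Delta N"
    and "card_below_t T le p"
    and "card_below_p T le p"
    and "fin_sat N p"
  shows "realized N p"
proof -
  note rsp = assms(1)[unfolded RSP_def]
  have refl: "\<forall>t\<in>T. le t t" using rsp by (elim conjE) assumption
  have trans: "\<forall>s\<in>T. \<forall>t\<in>T. \<forall>u\<in>T. le s t \<longrightarrow> le t u \<longrightarrow> le s u" using rsp by (elim conjE) assumption
  have rt1: "rt \<in> T" using rsp by (elim conjE) assumption
  have rt2: "\<forall>t\<in>T. le rt t" using rsp by (elim conjE) assumption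
  note rt = rt1 rt2
  have Dc: "\<forall>n1 phi1 n2 phi2. (n1, phi1) \<in> Delta \<longrightarrow> (n2, phi2) \<in> Delta \<longrightarrow>
        (n1 + n2, \<lambda>x ys. phi1 x (take n1 ys) \<and> phi2 x (drop n1 ys)) \<in> Delta" using rsp by (elim conjE) assumption
  have RNT: "\<forall>b t. R b t \<longrightarrow> b \<in> N \<and> t \<in> T" using rsp by (elim conjE) assumption
  have Rrt: "Rset R rt = N" using rsp by (elim conjE) assumption
  have mono: "\<forall>s\<in>T. \<forall>t\<in>T. le s t \<longrightarrow> Rset R t \<subseteq> Rset R s" using rsp by (elim conjE) assumption
  have ne: "\<forall>t\<in>T. Rset R t \<noteq> {}" using rsp by (elim conjE) assumption
  have ci: "\<forall>s\<in>T. \<forall>n phi as. (n, phi) \<in> Delta \<longrightarrow> as \<in> params N n \<longrightarrow>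
        (\<exists>b\<in>Rset R s. phi b as) \<longrightarrow>
        (\<exists>t\<in>T. le s t \<and> Rset R t = {b\<in>Rset R s. phi b as})" using rsp by (elim conjE) assumption
  have cj: "\<forall>n phi. (n, phi) \<in> Delta \<longrightarrow>
        (\<exists>F. \<forall>t\<in>T. \<forall>as\<in>params N n. (\<exists>b\<in>N. phi b as) \<longrightarrow>
           (F t as \<in> T \<and> le (F t as) t \<and> (\<exists>b\<in>Rset R (F t as). phi b as) \<and>
            (\<forall>s1\<in>T. le s1 t \<longrightarrow> (\<exists>b\<in>Rset R s1. phi b as) \<longrightarrow> le s1 (F t as))))" using rsp by (elim conjE) assumption
  have RN: "Rset R t \<subseteq> N" for t using RNT by (auto simp: Rset_def)
  show ?thesis
  proof (cases "finite p")
    case True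
    then show ?thesis using assms(5) unfolding fin_sat_def by blast
  next
    case inf: False
    define Q where "Q = {q. q \<subseteq> p \<and> finite q \<and> q \<noteq> {}}"
    obtain gq where gq: "inj_on gq Q" "gq ` Q \<subseteq> p"
    proof -
      have "|Q| \<le>o |Fpow p|" unfolding Q_def Fpow_def by (rule card_of_mono1) auto
      also have "|Fpow p| \<le>o |p|" using card_of_Fpow_infinite[OF inf] ordIso_iff_ordLeq by blast
      finally have "|Q| \<le>o |p|" .
      then have "\<exists>f. inj_on f Q \<and> f ` Q \<subseteq> p" by (simp only: card_of_ordLeq[symmetric])
      then show ?thesis using that by blast
    qed
    define G where "G = {t\<in>T. \<forall>q. q \<subseteq> p \<longrightarrow> finite q \<longrightarrow> (\<exists>b\<in>Rset R t. \<forall>(f, a)\<in>q. snd f b a)}"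
    have GT: "G \<subseteq> T" unfolding G_def by auto
    have rtG: "rt \<in> G"
      using rt assms(5) Rrt unfolding G_def fin_sat_def realized_def by auto
    have succ: "\<exists>t\<in>G. le u t \<and> Rset R t \<subseteq> {b. snd (fst x) b (snd x)}" if u: "u \<in> G" and x: "x \<in> p" for u x
    proof -
      obtain n phi as where xe: "x = ((n, phi), as)" by (metis prod.collapse)
      have D: "(n, phi) \<in> Delta" "as \<in> params N n" using x xe assms(2) by (auto simp: inst_def)
      have "\<exists>b\<in>Rset R u. \<forall>(f, a)\<in>{x}. snd f b a" using u x unfolding G_def by blast
      then have "\<exists>b\<in>Rset R u. phi b as" using xe by auto
      then obtain t where t: "t \<in> T" "le u t" "Rset R t = {b\<in>Rset R u. phi b as}"
        using ci u GT D by blast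
      have "t \<in> G" unfolding G_def
      proof (intro CollectI conjI allI impI)
        fix q assume q: "q \<subseteq> p" "finite q"
        have uG: "\<forall>q. q \<subseteq> p \<longrightarrow> finite q \<longrightarrow> (\<exists>b\<in>Rset R u. \<forall>(f, a)\<in>q. snd f b a)"
          using u unfolding G_def by blast
        have "insert x q \<subseteq> p" "finite (insert x q)" using q x by auto
        then obtain b where "b \<in> Rset R u" "\<forall>(f, a)\<in>insert x q. snd f b a"
          using uG by blast
        then show "\<exists>b\<in>Rset R t. \<forall>(f, a)\<in>q. snd f b a" using t xe by auto
      qed (use t in auto)
      then show ?thesis using t xe by auto
    qed
    have LBd: "\<exists>v\<in>G. \<forall>k\<in>K. le k v" if K: "K \<subseteq> G" "lin le K" "inj_on gK K" "gK ` K \<subseteq> p" for K gK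
    proof -
      have KT: "K \<subseteq> T" using K GT by auto
      obtain u where u: "u \<in> T" "\<forall>k\<in>K. le k u"
      proof -
        have cb: "\<forall>h. gK ` K \<subseteq> p \<longrightarrow> h ` (gK ` K) \<subseteq> T \<longrightarrow> lin le (h ` (gK ` K)) \<longrightarrow> (\<exists>u\<in>T. \<forall>j\<in>gK ` K. le (h j) u)"
          by (rule chain_bound[OF refl trans rt assms(3)])
        have ii: "inv_into K gK ` (gK ` K) = K" using K(3) by (simp add: inv_into_image_cancel)
        have "\<exists>u\<in>T. \<forall>j\<in>gK ` K. le (inv_into K gK j) u"
          using cb[rule_format, OF K(4)] ii KT K(2) by simp
        then show ?thesis using that K(3) by auto
      qed
      define U where "U = {s\<in>T. \<forall>k\<in>K. le k s}"
      define A where "A = {W. W \<subseteq> Q \<times> U \<and> (\<forall>q s s'. (q, s) \<in> W \<longrightarrow> (q, s') \<in> W \<longrightarrow> s = s') \<and>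
          lin le (snd ` W) \<and> (\<forall>(q, s)\<in>W. \<exists>b\<in>Rset R s. \<forall>(f, a)\<in>q. snd f b a)}"
      have AE1: "W \<subseteq> Q \<times> U" if "W \<in> A" for W using that unfolding A_def mem_Collect_eq by (elim conjE) assumption
      have AE2: "\<forall>q s s'. (q, s) \<in> W \<longrightarrow> (q, s') \<in> W \<longrightarrow> s = s'" if "W \<in> A" for W using that unfolding A_def mem_Collect_eq by (elim conjE) assumption
      have AE3: "lin le (snd ` W)" if "W \<in> A" for W using that unfolding A_def mem_Collect_eq by (elim conjE) assumption
      have AE4: "\<forall>(q, s)\<in>W. \<exists>b\<in>Rset R s. \<forall>(f, a)\<in>q. snd f b a" if "W \<in> A" for W using that unfolding A_def mem_Collect_eq by (elim conjE) assumption
      have "\<forall>C\<in>chains A. \<Union>C \<in> A"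
      proof
        fix C assume C: "C \<in> chains A"
        have CA: "C \<subseteq> A" and ch: "\<And>W1 W2. W1 \<in> C \<Longrightarrow> W2 \<in> C \<Longrightarrow> W1 \<subseteq> W2 \<or> W2 \<subseteq> W1"
          using C unfolding chains_def chain_subset_def by auto
        have two: "\<exists>W\<in>C. x \<in> W \<and> y \<in> W" if "x \<in> \<Union>C" "y \<in> \<Union>C" for x y
          using that ch by blast
        show "\<Union>C \<in> A" unfolding A_def
        proof (intro CollectI conjI allI impI)
          show "\<Union>C \<subseteq> Q \<times> U" by (rule Union_least) (use CA AE1 in blast)
          show "s = s'" if qs: "(q, s) \<in> \<Union>C" "(q, s') \<in> \<Union>C" for q s s'
          proof -
            obtain W where W: "W \<in> C" "(q, s) \<in> W" "(q, s') \<in> W" using two[OF qs] by blast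
            show ?thesis using AE2[OF subsetD[OF CA W(1)]] W(2,3) by blast
          qed
          show "lin le (snd ` \<Union>C)" unfolding lin_def
          proof (intro ballI)
            fix x y assume "x \<in> snd ` \<Union>C" "y \<in> snd ` \<Union>C"
            then obtain a b where "(a, x) \<in> \<Union>C" "(b, y) \<in> \<Union>C" by force
            then obtain W where W: "W \<in> C" "(a, x) \<in> W" "(b, y) \<in> W" using two by blast
            then have "lin le (snd ` W)" using AE3 CA by blast
            moreover have "x \<in> snd ` W" "y \<in> snd ` W" using W by force+
            ultimately show "le x y \<or> le y x" unfolding lin_def by blast
          qed
          show "\<forall>(q, s)\<in>\<Union>C. \<exists>b\<in>Rset R s. \<forall>(f, a)\<in>q. snd f b a"
          proof
            fix x assume "x \<in> \<Union>C"
            then obtain W where W: "W \<in> C" "x \<in> W" by blast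
            show "case x of (q, s) \<Rightarrow> \<exists>b\<in>Rset R s. \<forall>(f, a)\<in>q. snd f b a"
              using AE4[OF subsetD[OF CA W(1)]] W(2) by blast
          qed
        qed
      qed
      then obtain M where M: "M \<in> A" "\<forall>X\<in>A. M \<subseteq> X \<longrightarrow> X = M" using Zorn_Lemma by blast
      have MQU: "M \<subseteq> Q \<times> U" and Mfn: "\<forall>q s s'. (q, s) \<in> M \<longrightarrow> (q, s') \<in> M \<longrightarrow> s = s'"
        and Mlin: "lin le (snd ` M)" and Mp: "\<forall>(q, s)\<in>M. \<exists>b\<in>Rset R s. \<forall>(f, a)\<in>q. snd f b a"
        using AE1[OF M(1)] AE2[OF M(1)] AE3[OF M(1)] AE4[OF M(1)] by auto
      have injD: "inj_on (\<lambda>s. gq (SOME x. (x, s) \<in> M)) (snd ` M) \<and> (\<lambda>s. gq (SOME x. (x, s) \<in> M)) ` (snd ` M) \<subseteq> p"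
        by (rule fun_inj[OF Mfn _ gq]) (use MQU in auto)
      have DT: "snd ` M \<subseteq> T" using MQU U_def by auto
      have KD: "\<forall>k\<in>K. \<forall>d\<in>snd ` M. le k d" using MQU U_def by auto
      obtain v where v: "v \<in> T" "\<forall>k\<in>K. le k v" "\<forall>d\<in>snd ` M. le v d"
        using lower_bound[OF refl trans rt assms(4) KT K(2,3,4) DT Mlin injD[THEN conjunct1] injD[THEN conjunct2] KD] u
        by blast
      have dom: "fst ` M = Q"
      proof (rule ccontr)
        assume "fst ` M \<noteq> Q"
        then obtain q0 where q0: "q0 \<in> Q" "q0 \<notin> fst ` M" using MQU by auto
        have q0p: "q0 \<subseteq> p" "finite q0" "q0 \<noteq> {}" using q0 Q_def by auto
        have "q0 \<subseteq> inst Delta N" using q0p(1) assms(2) by blast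
        from conj_inst[OF Dc q0p(2,3) this]
        obtain n phi as where ins: "(n, phi) \<in> Delta" "as \<in> params N n"
          "\<forall>b. phi b as \<longleftrightarrow> (\<forall>(f, a)\<in>q0. snd f b a)"
          by blast
        obtain F where F: "\<forall>t\<in>T. \<forall>as\<in>params N n. (\<exists>b\<in>N. phi b as) \<longrightarrow>
           (F t as \<in> T \<and> le (F t as) t \<and> (\<exists>b\<in>Rset R (F t as). phi b as) \<and>
            (\<forall>s1\<in>T. le s1 t \<longrightarrow> (\<exists>b\<in>Rset R s1. phi b as) \<longrightarrow> le s1 (F t as)))"
          using cj ins(1) by blast
        have sat: "\<exists>b\<in>N. phi b as"
          using assms(5) q0p ins(3) unfolding fin_sat_def realized_def by blast
        define s where "s = F v as"
        have s: "s \<in> T" "le s v" "\<exists>b\<in>Rset R s. phi b as"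
          "\<forall>s1\<in>T. le s1 v \<longrightarrow> (\<exists>b\<in>Rset R s1. phi b as) \<longrightarrow> le s1 s"
          using F v(1) ins(2) sat unfolding s_def by blast+
        have sU: "s \<in> U" unfolding U_def
        proof (intro CollectI conjI ballI)
          show "s \<in> T" by (rule s(1))
          fix k assume k: "k \<in> K"
          then have "k \<in> G" using K by auto
          then have "\<exists>b\<in>Rset R k. phi b as" using q0p ins(3) unfolding G_def by blast
          then show "le k s" using s(4) k v(2) KT by blast
        qed
        have "insert (q0, s) M \<in> A" unfolding A_def
        proof (intro CollectI conjI allI impI)
          show "insert (q0, s) M \<subseteq> Q \<times> U" using MQU q0 sU by auto
          show "t = t'" if qs: "(q, t) \<in> insert (q0, s) M" "(q, t') \<in> insert (q0, s) M" for q t t'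
          proof (cases "q = q0")
            case True
            then have "(q, t) \<notin> M" "(q, t') \<notin> M" using q0(2) by force+
            then show ?thesis using qs by auto
          next
            case False
            then have "(q, t) \<in> M" "(q, t') \<in> M" using qs by auto
            then show ?thesis using Mfn by blast
          qed
          show "lin le (snd ` insert (q0, s) M)" unfolding lin_def
          proof (intro ballI)
            have sd: "le s d" if "d \<in> snd ` M" for d using that s v DT trans by blast
            fix x y assume "x \<in> snd ` insert (q0, s) M" "y \<in> snd ` insert (q0, s) M"
            then show "le x y \<or> le y x" using sd Mlin refl s(1) unfolding lin_def by auto
          qed
          show "\<forall>(q, t)\<in>insert (q0, s) M. \<exists>b\<in>Rset R t. \<forall>(f, a)\<in>q. snd f b a"
            using Mp s(3) ins(3) by auto
        qed
        then have "insert (q0, s) M = M" by (rule M(2)[rule_format]) (rule subset_insertI)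
        then have "(q0, s) \<in> M" by (metis insertI1)
        then show False using q0(2) by (metis fst_conv image_eqI)
      qed
      have "v \<in> G" unfolding G_def
      proof (intro CollectI conjI allI impI)
        show "v \<in> T" by (rule v(1))
        fix q assume q: "q \<subseteq> p" "finite q"
        show "\<exists>b\<in>Rset R v. \<forall>(f, a)\<in>q. snd f b a"
        proof (cases "q = {}")
          case True then show ?thesis using ne v(1) by auto
        next
          case False
          then have "q \<in> fst ` M" using dom q Q_def by auto
          then obtain t where t: "(q, t) \<in> M" by force
          then have "t \<in> T" "le v t" using DT v(3) by force+
          then have "Rset R t \<subseteq> Rset R v" using mono v(1) by blast
          then show ?thesis using Mp t by blast
        qed
      qed
      then show ?thesis using v(2) by blast
    qed
    define A where "A = {W. W \<subseteq> p \<times> G \<and> (\<forall>q s s'. (q, s) \<in> W \<longrightarrow> (q, s') \<in> W \<longrightarrow> s = s') \<and>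
        lin le (snd ` W) \<and> (\<forall>(x, s)\<in>W. Rset R s \<subseteq> {b. snd (fst x) b (snd x)})}"
    have AE1: "W \<subseteq> p \<times> G" if "W \<in> A" for W using that unfolding A_def mem_Collect_eq by (elim conjE) assumption
    have AE2: "\<forall>q s s'. (q, s) \<in> W \<longrightarrow> (q, s') \<in> W \<longrightarrow> s = s'" if "W \<in> A" for W using that unfolding A_def mem_Collect_eq by (elim conjE) assumption
    have AE3: "lin le (snd ` W)" if "W \<in> A" for W using that unfolding A_def mem_Collect_eq by (elim conjE) assumption
    have AE4: "\<forall>(x, s)\<in>W. Rset R s \<subseteq> {b. snd (fst x) b (snd x)}" if "W \<in> A" for W using that unfolding A_def mem_Collect_eq by (elim conjE) assumption
    have "\<forall>C\<in>chains A. \<Union>C \<in> A"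
    proof
      fix C assume C: "C \<in> chains A"
      have CA: "C \<subseteq> A" and ch: "\<And>W1 W2. W1 \<in> C \<Longrightarrow> W2 \<in> C \<Longrightarrow> W1 \<subseteq> W2 \<or> W2 \<subseteq> W1"
        using C unfolding chains_def chain_subset_def by auto
      have two: "\<exists>W\<in>C. x \<in> W \<and> y \<in> W" if "x \<in> \<Union>C" "y \<in> \<Union>C" for x y
        using that ch by blast
      show "\<Union>C \<in> A" unfolding A_def
      proof (intro CollectI conjI allI impI)
        show "\<Union>C \<subseteq> p \<times> G" by (rule Union_least) (use CA AE1 in blast)
        show "s = s'" if qs: "(q, s) \<in> \<Union>C" "(q, s') \<in> \<Union>C" for q s s'
        proof -
          obtain W where W: "W \<in> C" "(q, s) \<in> W" "(q, s') \<in> W" using two[OF qs] by blast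
          show ?thesis using AE2[OF subsetD[OF CA W(1)]] W(2,3) by blast
        qed
        show "lin le (snd ` \<Union>C)" unfolding lin_def
        proof (intro ballI)
          fix x y assume "x \<in> snd ` \<Union>C" "y \<in> snd ` \<Union>C"
          then obtain a b where "(a, x) \<in> \<Union>C" "(b, y) \<in> \<Union>C" by force
          then obtain W where "W \<in> C" "(a, x) \<in> W" "(b, y) \<in> W" using two by blast
          then have "lin le (snd ` W)" using AE3 CA by blast
          moreover have "x \<in> snd ` W" "y \<in> snd ` W" using \<open>(a, x) \<in> W\<close> \<open>(b, y) \<in> W\<close> by force+
          ultimately show "le x y \<or> le y x" unfolding lin_def by blast
        qed
        show "\<forall>(x, s)\<in>\<Union>C. Rset R s \<subseteq> {b. snd (fst x) b (snd x)}"
        proof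
          fix x assume "x \<in> \<Union>C"
          then obtain W where W: "W \<in> C" "x \<in> W" by blast
          show "case x of (x, s) \<Rightarrow> Rset R s \<subseteq> {b. snd (fst x) b (snd x)}"
            using AE4[OF subsetD[OF CA W(1)]] W(2) by blast
        qed
      qed
    qed
    then obtain M where M: "M \<in> A" "\<forall>X\<in>A. M \<subseteq> X \<longrightarrow> X = M" using Zorn_Lemma by blast
    have MpG: "M \<subseteq> p \<times> G" and Mfn: "\<forall>q s s'. (q, s) \<in> M \<longrightarrow> (q, s') \<in> M \<longrightarrow> s = s'"
      and Mlin: "lin le (snd ` M)" and Mp: "\<forall>(x, s)\<in>M. Rset R s \<subseteq> {b. snd (fst x) b (snd x)}"
      using AE1[OF M(1)] AE2[OF M(1)] AE3[OF M(1)] AE4[OF M(1)] by auto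
    have injD: "inj_on (\<lambda>s. id (SOME x. (x, s) \<in> M)) (snd ` M) \<and> (\<lambda>s. id (SOME x. (x, s) \<in> M)) ` (snd ` M) \<subseteq> p"
      by (rule fun_inj[OF Mfn _ inj_on_id[of p]]) (use MpG in auto)
    have KG: "snd ` M \<subseteq> G" using MpG by auto
    have dom: "fst ` M = p"
    proof (rule ccontr)
      assume "fst ` M \<noteq> p"
      then obtain x0 where x0: "x0 \<in> p" "x0 \<notin> fst ` M" using MpG by auto
      obtain u where u: "u \<in> G" "\<forall>k\<in>snd ` M. le k u"
        using LBd[OF KG Mlin injD[THEN conjunct1] injD[THEN conjunct2]] by blast
      obtain t where t: "t \<in> G" "le u t" "Rset R t \<subseteq> {b. snd (fst x0) b (snd x0)}"
        using succ[OF u(1) x0(1)] by blast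
      have "insert (x0, t) M \<in> A" unfolding A_def
      proof (intro CollectI conjI allI impI)
        show "insert (x0, t) M \<subseteq> p \<times> G" using MpG x0 t by auto
        show "s = s'" if qs: "(q, s) \<in> insert (x0, t) M" "(q, s') \<in> insert (x0, t) M" for q s s'
        proof (cases "q = x0")
          case True
          then have "(q, s) \<notin> M" "(q, s') \<notin> M" using x0(2) by force+
          then show ?thesis using qs by auto
        next
          case False
          then have "(q, s) \<in> M" "(q, s') \<in> M" using qs by auto
          then show ?thesis using Mfn by blast
        qed
        show "lin le (snd ` insert (x0, t) M)" unfolding lin_def
        proof (intro ballI)
          have sd: "le d t" if "d \<in> snd ` M" for d using that u t KG GT trans by (meson subsetD)
          fix x y assume "x \<in> snd ` insert (x0, t) M" "y \<in> snd ` insert (x0, t) M"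
          then show "le x y \<or> le y x" using sd Mlin refl t(1) GT unfolding lin_def by auto
        qed
        show "\<forall>(x, s)\<in>insert (x0, t) M. Rset R s \<subseteq> {b. snd (fst x) b (snd x)}"
          using Mp t(3) by auto
      qed
      then have "insert (x0, t) M = M" by (rule M(2)[rule_format]) (rule subset_insertI)
      then have "(x0, t) \<in> M" by (metis insertI1)
      then show False using x0(2) by (metis fst_conv image_eqI)
    qed
    obtain t where t: "t \<in> G" "\<forall>k\<in>snd ` M. le k t"
      using LBd[OF KG Mlin injD[THEN conjunct1] injD[THEN conjunct2]] by blast
    have "t \<in> T" using t(1) GT by blast
    then have "Rset R t \<noteq> {}" using ne by blast
    then obtain b where b: "b \<in> Rset R t" by blast
    have "\<forall>(f, as)\<in>p. snd f b as"
    proof (intro ballI, clarify)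
      fix f as assume x: "(f, as) \<in> p"
      then obtain s where s: "((f, as), s) \<in> M" using dom by force
      then have "s \<in> T" "le s t" using t KG GT by force+
      then have "Rset R t \<subseteq> Rset R s" using mono t(1) GT by blast
      moreover have "Rset R s \<subseteq> {b. snd (fst (f, as)) b (snd (f, as))}" using Mp s by fastforce
      ultimately show "snd f b as" using b by auto
    qed
    then show ?thesis unfolding realized_def using b RN by blast
  qed
qed

end
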